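(* Let $n\ge1$ and let $Q_1$ be a Kazhdan subset of $\mathbb R^{2n}=\mathbb R^n\times\mathbb R^n$, whose elements are written $(\mathbf q,\mathbf p)$. Then $\sup\{|\mathbf p|:(\mathbf q,\mathbf p)\in Q_1\}=+\infty$, where $|\mathbf p|$ is the Euclidean norm of $\mathbf p$.
   Context: A subset $Q$ is a Kazhdan set in $\mathbb R^{2n}$ (additive group, usual topology) if there exists $\varepsilon>0$ such that every strongly continuous unitary representation $\pi$ of $\mathbb R^{2n}$ on a complex Hilbert space having a vector $x$ with $\sup_{g\in Q}\|\pi(g)x-x\|<\varepsilon\|x\|$ has a non-zero invariant vector. *)

theory Defs
  imports "HOL-Analysis.Analysis"
begin

text \<open>A complex Hilbert space is encoded as a real Hilbert space (type class
  real_inner + complete_space) together with a complex structure J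
  (multiplication by i): a real-linear isometry with J (J x) = - x.\<close>

definition complex_structure :: "('h::{real_inner,complete_space} \<Rightarrow> 'h) \<Rightarrow> bool" where
  "complex_structure J \<longleftrightarrow> linear J \<and> (\<forall>x. J (J x) = - x) \<and> (\<forall>x. norm (J x) = norm x)"

definition unitary_op :: "('h::{real_inner,complete_space} \<Rightarrow> 'h) \<Rightarrow> ('h \<Rightarrow> 'h) \<Rightarrow> bool" where
  "unitary_op J U \<longleftrightarrow> linear U \<and> (\<forall>x. U (J x) = J (U x)) \<and> (\<forall>x. norm (U x) = norm x) \<and> surj U"

definition unitary_rep ::
  "('h::{real_inner,complete_space} \<Rightarrow> 'h) \<Rightarrow> ((real^'n) \<times> (real^'n) \<Rightarrow> 'h \<Rightarrow> 'h) \<Rightarrow> bool" where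
  "unitary_rep J \<pi> \<longleftrightarrow>
     (\<forall>g. unitary_op J (\<pi> g)) \<and> \<pi> 0 = id \<and> (\<forall>g h. \<pi> (g + h) = \<pi> g \<circ> \<pi> h) \<and>
     (\<forall>x. continuous_on UNIV (\<lambda>g. \<pi> g x))"

text \<open>The condition sup over Q of the norms of (pi g x - x)
  being strictly less than eps times the norm of x is written as existence of
  a bound delta < eps * norm x (with x nonzero).\<close>

definition kazhdan_set_on ::
  "('h::{real_inner,complete_space} \<Rightarrow> 'h) \<Rightarrow> ((real^'n) \<times> (real^'n)) set \<Rightarrow> bool" where
  "kazhdan_set_on J Q \<longleftrightarrow>
     (\<exists>\<epsilon>>0. \<forall>\<pi> :: (real^'n) \<times> (real^'n) \<Rightarrow> 'h \<Rightarrow> 'h. unitary_rep J \<pi> \<longrightarrow>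
        (\<exists>x. x \<noteq> 0 \<and> (\<exists>\<delta>. \<delta> < \<epsilon> * norm x \<and> (\<forall>g\<in>Q. norm (\<pi> g x - x) \<le> \<delta>))) \<longrightarrow>
        (\<exists>v. v \<noteq> 0 \<and> (\<forall>g. \<pi> g v = v)))"

end

theory Submission
  imports Defs
begin

lemma cs_inner:
  assumes "complex_structure J"
  shows "inner (J x) (J y) = inner x y"
proof -
  have L: "linear J" and N: "\<And>x. norm (J x) = norm x" using assms unfolding complex_structure_def by auto
  have a: "\<And>z. inner (J z) (J z) = inner z z" using N by (metis dot_square_norm)
  have "inner (J (x+y)) (J (x+y)) = inner (x+y) (x+y)" by (rule a)
  hence "inner (J x + J y) (J x + J y) = inner (x+y) (x+y)" using L by (simp add: linear_add)
  hence "inner (J x) (J x) + 2 * inner (J x) (J y) + inner (J y) (J y) = inner x x + 2 * inner x y + inner y y"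
    by (simp add: inner_add inner_commute algebra_simps)
  thus ?thesis using a[of x] a[of y] by simp
qed

lemma cs_orth:
  assumes "complex_structure J"
  shows "inner x (J x) = 0"
proof -
  have JJ: "J (J x) = - x" using assms unfolding complex_structure_def by auto
  have "inner x (J x) = inner (J x) (J (J x))" using cs_inner[OF assms] by simp
  also have "... = - inner x (J x)" using JJ by (simp add: inner_commute)
  finally show ?thesis by simp
qed

definition Rot :: "('h::{real_inner,complete_space} \<Rightarrow> 'h) \<Rightarrow> real \<Rightarrow> 'h \<Rightarrow> 'h" where
  "Rot J a x = cos a *\<^sub>R x + sin a *\<^sub>R J x"

lemma Rot_linear:
  assumes "complex_structure J"
  shows "linear (Rot J a)"
proof -
  have L: "linear J" using assms unfolding complex_structure_def by auto
  show ?thesis unfolding Rot_def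
    by (rule linearI) (simp_all add: linear_add[OF L] linear_scale[OF L] algebra_simps)
qed

lemma Rot_J:
  assumes "complex_structure J"
  shows "Rot J a (J x) = J (Rot J a x)"
proof -
  have L: "linear J" and JJ: "\<And>x. J (J x) = - x" using assms unfolding complex_structure_def by auto
  show ?thesis unfolding Rot_def using L JJ by (simp add: linear_add linear_scale)
qed

lemma Rot_norm:
  assumes "complex_structure J"
  shows "norm (Rot J a x) = norm x"
proof -
  have N: "\<And>x. norm (J x) = norm x" using assms unfolding complex_structure_def by auto
  have "(norm (Rot J a x))^2 = inner (Rot J a x) (Rot J a x)" by (simp add: dot_square_norm)
  also have "... = (cos a)^2 * inner x x + (sin a)^2 * inner (J x) (J x) + 2 * cos a * sin a * inner x (J x)"
    unfolding Rot_def by (simp add: inner_add inner_commute algebra_simps power2_eq_square)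
  also have "... = (cos a)^2 * inner x x + (sin a)^2 * inner x x" using cs_orth[OF assms, of x] cs_inner[OF assms, of x x]
    by simp
  also have "... = ((cos a)^2 + (sin a)^2) * inner x x" by (rule distrib_right[symmetric])
  also have "... = (norm x)^2" by (simp add: dot_square_norm)
  finally show ?thesis by simp
qed

lemma Rot_add:
  assumes "complex_structure J"
  shows "Rot J a (Rot J b x) = Rot J (a + b) x"
proof -
  have L: "linear J" and JJ: "\<And>x. J (J x) = - x" using assms unfolding complex_structure_def by auto
  show ?thesis unfolding Rot_def using L JJ
    by (simp add: linear_add linear_scale cos_add sin_add algebra_simps)
qed

lemma Rot_0: "Rot J 0 = id"
  by (rule ext) (simp add: Rot_def)

lemma Rot_surj:
  assumes "complex_structure J"
  shows "surj (Rot J a)"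
proof -
  have "\<And>y. Rot J a (Rot J (-a) y) = y"
  proof -
    fix y
    have "Rot J a (Rot J (-a) y) = Rot J 0 y" using Rot_add[OF assms, of a "-a" y] by simp
    thus "Rot J a (Rot J (-a) y) = y" by (simp add: Rot_def)
  qed
  thus ?thesis by (metis surjI)
qed

lemma cos_close: "\<bar>cos (a::real) - 1\<bar> \<le> \<bar>a\<bar>"
proof -
  have e: "cos a = 1 - 2 * (sin (a/2))^2" using cos_double_sin[of "a/2"] by simp
  have "\<bar>sin (a/2)\<bar>^2 \<le> \<bar>sin (a/2)\<bar>" using abs_sin_le_one[of "a/2"]
    by (metis abs_ge_zero abs_power2 mult_left_le power2_eq_square power2_abs)
  also have "... \<le> \<bar>a/2\<bar>" by (rule abs_sin_x_le_abs_x)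
  finally have "\<bar>sin (a/2)\<bar>^2 \<le> \<bar>a\<bar>/2" by simp
  thus ?thesis using e by (simp add: abs_mult)
qed

lemma Rot_close:
  assumes "complex_structure J"
  shows "norm (Rot J a x - x) \<le> 2 * \<bar>a\<bar> * norm x"
proof -
  have N: "\<And>x. norm (J x) = norm x" using assms unfolding complex_structure_def by auto
  have "Rot J a x - x = (cos a - 1) *\<^sub>R x + sin a *\<^sub>R J x" unfolding Rot_def by (simp add: algebra_simps)
  hence "norm (Rot J a x - x) \<le> \<bar>cos a - 1\<bar> * norm x + \<bar>sin a\<bar> * norm x"
    using norm_triangle_ineq[of "(cos a - 1) *\<^sub>R x" "sin a *\<^sub>R J x"] N by simp
  also have "... \<le> \<bar>a\<bar> * norm x + \<bar>a\<bar> * norm x"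
    by (intro add_mono mult_right_mono abs_sin_x_le_abs_x cos_close) auto
  finally show ?thesis by simp
qed

theorem lemmaG:
  fixes Q1 :: "((real^'n) \<times> (real^'n)) set"
    and J :: "'h::{real_inner,complete_space} \<Rightarrow> 'h"
  assumes "complex_structure J"
    and "\<exists>x::'h. x \<noteq> 0"
    and "kazhdan_set_on J Q1"
  shows "\<forall>M::real. \<exists>z\<in>Q1. norm (snd z) > M"
proof (rule ccontr)
  assume "\<not> ?thesis"
  then obtain M where M: "\<And>z. z \<in> Q1 \<Longrightarrow> norm (snd z) \<le> M" by (auto simp: not_less)
  obtain \<epsilon> where ep: "\<epsilon> > 0" and K: "\<forall>\<pi> :: (real^'n) \<times> (real^'n) \<Rightarrow> 'h \<Rightarrow> 'h. unitary_rep J \<pi> \<longrightarrow>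
        (\<exists>x. x \<noteq> 0 \<and> (\<exists>\<delta>. \<delta> < \<epsilon> * norm x \<and> (\<forall>g\<in>Q1. norm (\<pi> g x - x) \<le> \<delta>))) \<longrightarrow>
        (\<exists>v. v \<noteq> 0 \<and> (\<forall>g. \<pi> g v = v))"
    using assms(3) unfolding kazhdan_set_on_def by (elim exE conjE) 
  define M' where "M' = max M 0"
  define t where "t = \<epsilon> / (4 * (M' + 1))"
  have M'0: "M' \<ge> 0" by (simp add: M'_def)
  have t0: "t > 0" using ep M'0 by (simp add: t_def)
  obtain i :: 'n where True by simp
  define \<pi> where "\<pi> = (\<lambda>g::(real^'n) \<times> (real^'n). Rot J (t * (snd g $ i)))"
  have rep: "unitary_rep J \<pi>"
    unfolding unitary_rep_def unitary_op_def
  proof (intro conjI allI)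
    fix g show "linear (\<pi> g)" unfolding \<pi>_def by (rule Rot_linear[OF assms(1)])
    fix x show "\<pi> g (J x) = J (\<pi> g x)" unfolding \<pi>_def by (rule Rot_J[OF assms(1)])
  next
    fix g x show "norm (\<pi> g x) = norm x" unfolding \<pi>_def by (rule Rot_norm[OF assms(1)])
  next
    fix g show "surj (\<pi> g)" unfolding \<pi>_def by (rule Rot_surj[OF assms(1)])
  next
    show "\<pi> 0 = id" unfolding \<pi>_def by (simp add: Rot_0)
  next
    fix g h show "\<pi> (g + h) = \<pi> g \<circ> \<pi> h" unfolding \<pi>_def
      by (rule ext) (simp add: Rot_add[OF assms(1)] algebra_simps)
  next
    fix x show "continuous_on UNIV (\<lambda>g. \<pi> g x)" unfolding \<pi>_def Rot_def
      by (intro continuous_intros)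
  qed
  obtain x :: 'h where x0: "x \<noteq> 0" using assms(2) by blast
  have "\<exists>v. v \<noteq> 0 \<and> (\<forall>g. \<pi> g v = v)"
  proof (rule K[rule_format, OF rep], intro exI conjI ballI)
    show "x \<noteq> 0" by fact
    have "2 * t * M' * norm x = \<epsilon> * norm x * (M' / (2 * (M' + 1)))"
      using M'0 by (simp add: t_def field_simps add_pos_nonneg)
    also have "... < \<epsilon> * norm x"
    proof -
      have p: "\<epsilon> * norm x > 0" using ep x0 by simp
      have q: "M' / (2 * (M' + 1)) < 1" using M'0 by (simp add: divide_less_eq)
      show ?thesis using mult_strict_left_mono[OF q p] by simp
    qed
    finally show "2 * t * M' * norm x < \<epsilon> * norm x" .
  next
    fix g assume g: "g \<in> Q1"
    have "\<bar>snd g $ i\<bar> \<le> M'" using M[OF g] component_le_norm_cart[of "snd g" i] M'_def by linarith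
    hence a: "\<bar>t * (snd g $ i)\<bar> \<le> t * M'" using t0 by (simp add: abs_mult)
    have "norm (\<pi> g x - x) \<le> 2 * \<bar>t * (snd g $ i)\<bar> * norm x" unfolding \<pi>_def by (rule Rot_close[OF assms(1)])
    also have "... \<le> 2 * (t * M') * norm x" using a by (intro mult_right_mono) auto
    finally show "norm (\<pi> g x - x) \<le> 2 * t * M' * norm x" by simp
  qed
  then obtain v where v0: "v \<noteq> 0" and inv: "\<And>g. \<pi> g v = v" by blast
  have "\<pi> (0, \<chi> j. pi / t) v = - v" unfolding \<pi>_def Rot_def using t0 by simp
  hence "v = - v" using inv by simp
  hence "v + v = 0" by (metis add.right_inverse)
  hence "(2::real) *\<^sub>R v = 0" by (simp add: scaleR_2)
  thus False using v0 by simp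
qed

end
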